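(* Let $d\ge 1$ and let $G$ be an undirected graph. (i) If $C$ is a clique of $G$ with at least $2d+1$ vertices, then $C$ is monochromatic. (ii) If $X$ and $Y$ are monochromatic sets with $X\cap Y\neq\emptyset$, then $X\cup Y$ is monochromatic. (iii) If a vertex $u$ has more than $d$ neighbors in a monochromatic set $X$, then $X\cup\{u\}$ is monochromatic. (iv) If $T\subseteq V(G)$ is such that more than $2d$ vertices of $V(G)\setminus T$ have neighborhoods containing $T$, then $T$ is monochromatic.
   Context: All graphs are finite, simple and undirected. A cut of $G$ is a partition $(A,B)$ of $V(G)$ into two nonempty sets. A cut $(A,B)$ is a $d$-cut if every vertex of $A$ has at most $d$ neighbors in $B$ and every vertex of $B$ has at most $d$ neighbors in $A$. A set $T\subseteq V(G)$ is monochromatic if for every $d$-cut $(A,B)$ of $G$, either $T\subseteq A$ or $T\subseteq B$. *)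

theory Defs
  imports Main
begin

definition simple_graph :: "'a set \<Rightarrow> ('a \<Rightarrow> 'a \<Rightarrow> bool) \<Rightarrow> bool" where
  "simple_graph V E \<longleftrightarrow> finite V \<and> (\<forall>u v. E u v \<longrightarrow> u \<in> V \<and> v \<in> V)
     \<and> (\<forall>u v. E u v \<longrightarrow> E v u) \<and> (\<forall>v. \<not> E v v)"

definition nbrs_in :: "('a \<Rightarrow> 'a \<Rightarrow> bool) \<Rightarrow> 'a \<Rightarrow> 'a set \<Rightarrow> nat" where
  "nbrs_in E v S = card {w \<in> S. E v w}"

definition is_cut :: "'a set \<Rightarrow> 'a set \<Rightarrow> 'a set \<Rightarrow> bool" where
  "is_cut V A B \<longleftrightarrow> A \<noteq> {} \<and> B \<noteq> {} \<and> A \<inter> B = {} \<and> A \<union> B = V"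

definition d_cut :: "'a set \<Rightarrow> ('a \<Rightarrow> 'a \<Rightarrow> bool) \<Rightarrow> nat \<Rightarrow> 'a set \<Rightarrow> 'a set \<Rightarrow> bool" where
  "d_cut V E d A B \<longleftrightarrow> is_cut V A B
     \<and> (\<forall>v\<in>A. nbrs_in E v B \<le> d) \<and> (\<forall>v\<in>B. nbrs_in E v A \<le> d)"

definition monochromatic :: "'a set \<Rightarrow> ('a \<Rightarrow> 'a \<Rightarrow> bool) \<Rightarrow> nat \<Rightarrow> 'a set \<Rightarrow> bool" where
  "monochromatic V E d T \<longleftrightarrow> T \<subseteq> V \<and>
     (\<forall>A B. d_cut V E d A B \<longrightarrow> T \<subseteq> A \<or> T \<subseteq> B)"

definition clique :: "'a set \<Rightarrow> ('a \<Rightarrow> 'a \<Rightarrow> bool) \<Rightarrow> 'a set \<Rightarrow> bool" where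
  "clique V E C \<longleftrightarrow> C \<subseteq> V \<and> (\<forall>u\<in>C. \<forall>v\<in>C. u \<noteq> v \<longrightarrow> E u v)"

end

theory Submission
  imports Defs
begin

lemma nb_bound:
  assumes "simple_graph V E" "d_cut V E d A B" "v \<in> A" "W \<subseteq> B" "\<forall>w\<in>W. E v w"
  shows "card W \<le> d"
proof -
  have fin: "finite B" using assms(1,2) unfolding simple_graph_def d_cut_def is_cut_def
    by (metis finite_Un)
  have "card W \<le> card {w \<in> B. E v w}"
    by (rule card_mono) (use fin assms(4,5) in auto)
  also have "\<dots> \<le> d" using assms(2,3) unfolding d_cut_def nbrs_in_def by auto
  finally show ?thesis .
qed

lemma split_card_le:
  assumes "card (S \<inter> A) \<le> d" "card (S \<inter> B) \<le> d" "S = (S \<inter> A) \<union> (S \<inter> B)"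
  shows "card S \<le> 2 * d"
proof -
  have "card S = card ((S \<inter> A) \<union> (S \<inter> B))" using assms(3) by (rule arg_cong)
  also have "\<dots> \<le> card (S \<inter> A) + card (S \<inter> B)" by (rule card_Un_le)
  finally show ?thesis using assms(1,2) by linarith
qed

lemma d_cut_sym: "d_cut V E d A B \<Longrightarrow> d_cut V E d B A"
  unfolding d_cut_def is_cut_def by auto

lemma part1:
  assumes g: "simple_graph V E" and c: "clique V E C" and k: "card C \<ge> 2 * d + 1"
  shows "monochromatic V E d C"
  unfolding monochromatic_def
proof (intro conjI allI impI)
  show "C \<subseteq> V" using c unfolding clique_def by auto
  fix A B assume cut: "d_cut V E d A B"
  show "C \<subseteq> A \<or> C \<subseteq> B"
  proof (rule ccontr)
    assume "\<not> ?thesis"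
    then obtain a b where a: "a \<in> C" "a \<notin> A" and b: "b \<in> C" "b \<notin> B" by auto
    have CV: "C \<subseteq> V" using c unfolding clique_def by auto
    have AB: "A \<inter> B = {}" "A \<union> B = V" using cut unfolding d_cut_def is_cut_def by auto
    have aB: "a \<in> B" and bA: "b \<in> A" using a b CV AB by auto
    have e1: "\<forall>x\<in>C \<inter> B. E b x" using b c AB unfolding clique_def by auto
    have e2: "\<forall>x\<in>C \<inter> A. E a x" using a c AB unfolding clique_def by auto
    have "card (C \<inter> B) \<le> d"
      using nb_bound[OF g cut bA, of "C \<inter> B"] e1 by auto
    moreover have "card (C \<inter> A) \<le> d"
      using nb_bound[OF g d_cut_sym[OF cut] aB, of "C \<inter> A"] e2 by auto
    moreover have "finite C" using CV g unfolding simple_graph_def by (meson finite_subset)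
    moreover have "C = (C \<inter> A) \<union> (C \<inter> B)" using CV AB by auto
    ultimately have "card C \<le> 2 * d"
      using split_card_le[where S=C and A=A and B=B] by blast
    then show False using k by simp
  qed
qed

lemma part2:
  assumes "monochromatic V E d X" "monochromatic V E d Y" "X \<inter> Y \<noteq> {}"
  shows "monochromatic V E d (X \<union> Y)"
proof -
  { fix A B assume cut: "d_cut V E d A B"
    have AB: "A \<inter> B = {}" using cut unfolding d_cut_def is_cut_def by auto
    have "X \<subseteq> A \<or> X \<subseteq> B" "Y \<subseteq> A \<or> Y \<subseteq> B" using assms cut unfolding monochromatic_def by auto
    then have "X \<union> Y \<subseteq> A \<or> X \<union> Y \<subseteq> B" using assms(3) AB by blast }
  moreover have "X \<union> Y \<subseteq> V" using assms(1,2) unfolding monochromatic_def by blast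
  ultimately show ?thesis unfolding monochromatic_def by blast
qed

lemma part3:
  assumes g: "simple_graph V E" and m: "monochromatic V E d X" and u: "u \<in> V"
    and n: "nbrs_in E u X > d"
  shows "monochromatic V E d (X \<union> {u})"
proof -
  { fix A B assume cut: "d_cut V E d A B"
    have AB: "A \<inter> B = {}" "A \<union> B = V" using cut unfolding d_cut_def is_cut_def by auto
    have XV: "X \<subseteq> V" using m unfolding monochromatic_def by auto
    have finX: "finite X" using XV g unfolding simple_graph_def by (meson finite_subset)
    have "X \<subseteq> A \<or> X \<subseteq> B" using m cut unfolding monochromatic_def by auto
    then have "X \<union> {u} \<subseteq> A \<or> X \<union> {u} \<subseteq> B"
    proof
      assume XA: "X \<subseteq> A"
      show ?thesis
      proof (rule ccontr)
        assume "\<not> ?thesis"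
        then have uB: "u \<in> B" using XA AB u by auto
        have sub: "{w \<in> X. E u w} \<subseteq> A" using XA by blast
        have "card {w \<in> X. E u w} \<le> d"
          by (rule nb_bound[OF g d_cut_sym[OF cut] uB sub]) simp
        then show False using n unfolding nbrs_in_def by simp
      qed
    next
      assume XB: "X \<subseteq> B"
      show ?thesis
      proof (rule ccontr)
        assume "\<not> ?thesis"
        then have uA: "u \<in> A" using XB AB u by auto
        have sub: "{w \<in> X. E u w} \<subseteq> B" using XB by blast
        have "card {w \<in> X. E u w} \<le> d"
          by (rule nb_bound[OF g cut uA sub]) simp
        then show False using n unfolding nbrs_in_def by simp
      qed
    qed }
  moreover have "X \<union> {u} \<subseteq> V" using m u unfolding monochromatic_def by blast
  ultimately show ?thesis unfolding monochromatic_def by blast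
qed

lemma part4:
  assumes g: "simple_graph V E" and TV: "T \<subseteq> V" and k: "card {v \<in> V - T. \<forall>t\<in>T. E v t} > 2 * d"
  shows "monochromatic V E d T"
  unfolding monochromatic_def
proof (intro conjI allI impI)
  show "T \<subseteq> V" by fact
  fix A B assume cut: "d_cut V E d A B"
  show "T \<subseteq> A \<or> T \<subseteq> B"
  proof (rule ccontr)
    assume "\<not> ?thesis"
    then obtain a b where a: "a \<in> T" "a \<notin> A" and b: "b \<in> T" "b \<notin> B" by auto
    define S where "S = {v \<in> V - T. \<forall>t\<in>T. E v t}"
    have AB: "A \<inter> B = {}" "A \<union> B = V" using cut unfolding d_cut_def is_cut_def by auto
    have aB: "a \<in> B" and bA: "b \<in> A" using a b TV AB by auto
    have sym: "\<And>x y. E x y \<Longrightarrow> E y x" using g unfolding simple_graph_def by auto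
    have "card (S \<inter> B) \<le> d"
      using nb_bound[OF g cut bA, of "S \<inter> B"] b sym unfolding S_def by auto
    moreover have "card (S \<inter> A) \<le> d"
      using nb_bound[OF g d_cut_sym[OF cut] aB, of "S \<inter> A"] a sym unfolding S_def by auto
    moreover have "S = (S \<inter> A) \<union> (S \<inter> B)" using AB unfolding S_def by auto
    ultimately have "card S \<le> 2 * d"
      using split_card_le[where S=S and A=A and B=B] by blast
    then show False using k unfolding S_def by simp
  qed
qed

theorem lemma6:
  fixes V :: "'a set" and E :: "'a \<Rightarrow> 'a \<Rightarrow> bool" and d :: nat
  assumes "d \<ge> 1" and "simple_graph V E"
  shows "(\<forall>C. clique V E C \<and> card C \<ge> 2 * d + 1 \<longrightarrow> monochromatic V E d C)
    \<and> (\<forall>X Y. monochromatic V E d X \<and> monochromatic V E d Y \<and> X \<inter> Y \<noteq> {}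
            \<longrightarrow> monochromatic V E d (X \<union> Y))
    \<and> (\<forall>X u. monochromatic V E d X \<and> u \<in> V \<and> nbrs_in E u X > d
            \<longrightarrow> monochromatic V E d (X \<union> {u}))
    \<and> (\<forall>T. T \<subseteq> V \<and> card {v \<in> V - T. \<forall>t\<in>T. E v t} > 2 * d
            \<longrightarrow> monochromatic V E d T)"
proof (intro conjI allI impI)
  fix C assume "clique V E C \<and> card C \<ge> 2 * d + 1"
  then show "monochromatic V E d C" using part1[OF assms(2), where C=C and d=d] by blast
next
  fix X Y assume "monochromatic V E d X \<and> monochromatic V E d Y \<and> X \<inter> Y \<noteq> {}"
  then show "monochromatic V E d (X \<union> Y)" using part2[where V=V and E=E and d=d and X=X and Y=Y] by blast
next
  fix X u assume "monochromatic V E d X \<and> u \<in> V \<and> nbrs_in E u X > d"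
  then show "monochromatic V E d (X \<union> {u})" using part3[OF assms(2), where X=X and u=u and d=d] by blast
next
  fix T assume "T \<subseteq> V \<and> card {v \<in> V - T. \<forall>t\<in>T. E v t} > 2 * d"
  then show "monochromatic V E d T" using part4[OF assms(2), where T=T and d=d] by blast
qed

end
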